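(* Let $X,W\in L^1$ and suppose $W$ has a continuous distribution. Then $u_\lambda^c(X;W)=0$ for every $\lambda\in(0,1]$ if and only if $\mathsf{E}(X\mid W)=0$ almost surely.
   Context: Let $(\Omega,\mathcal{F},\mathsf{P})$ be a probability space, $L^1=L^1(\mathsf{P})$, and $\mathcal{P}$ the set of probability measures on $\mathcal{F}$ absolutely continuous with respect to $\mathsf{P}$. For $\mathsf{Q}\in\mathcal{P}$, $\mathsf{E}_\mathsf{Q}X:=\mathsf{E}_\mathsf{Q}X^+-\mathsf{E}_\mathsf{Q}X^-$ with the convention $\infty-\infty=-\infty$. For $\lambda\in(0,1]$, let $\mathcal{D}_\lambda=\{\mathsf{Q}\in\mathcal{P}:d\mathsf{Q}/d\mathsf{P}\le\lambda^{-1}\}$ and $u_\lambda(X)=\inf_{\mathsf{Q}\in\mathcal{D}_\lambda}\mathsf{E}_\mathsf{Q}X$ (minus Tail V@R of order $\lambda$). The set of extreme measures of $W$ is $\mathcal{X}_{\mathcal{D}_\lambda}(W)=\{\mathsf{Q}\in\mathcal{D}_\lambda:\mathsf{E}_\mathsf{Q}W=u_\lambda(W)\in(-\infty,\infty)\}$, and the utility contribution is $u_\lambda^c(X;W)=\inf_{\mathsf{Q}\in\mathcal{X}_{\mathcal{D}_\lambda}(W)}\mathsf{E}_\mathsf{Q}X$. *)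

theory Defs
  imports "HOL-Probability.Probability"
begin

text \<open>Probability measures Q absolutely continuous w.r.t. P with density dQ/dP bounded by 1/lambda
  (P-a.e.). Every such Q is of the form density M f (Radon-Nikodym), so we parametrise by densities.\<close>
definition Dlam :: "'a measure \<Rightarrow> real \<Rightarrow> 'a measure set" where
  "Dlam M lam = {Q. \<exists>f. f \<in> borel_measurable M \<and> (\<forall>x\<in>space M. 0 \<le> f x)
       \<and> (AE x in M. f x \<le> 1 / lam)
       \<and> Q = density M (\<lambda>x. ennreal (f x)) \<and> prob_space Q}"

text \<open>E_Q X = E_Q X^+ - E_Q X^- with the convention infinity - infinity = -infinity.\<close>
definition EQ :: "'a measure \<Rightarrow> ('a \<Rightarrow> real) \<Rightarrow> ereal" where
  "EQ Q X = (let p = (\<integral>\<^sup>+ x. ennreal (X x) \<partial>Q); n = (\<integral>\<^sup>+ x. ennreal (- X x) \<partial>Q) in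
     if n = \<infinity> then - \<infinity> else enn2ereal p - enn2ereal n)"

definition u_lam :: "'a measure \<Rightarrow> real \<Rightarrow> ('a \<Rightarrow> real) \<Rightarrow> ereal" where
  "u_lam M lam X = (INF Q \<in> Dlam M lam. EQ Q X)"

definition extreme_measures :: "'a measure \<Rightarrow> real \<Rightarrow> ('a \<Rightarrow> real) \<Rightarrow> 'a measure set" where
  "extreme_measures M lam W =
     {Q \<in> Dlam M lam. EQ Q W = u_lam M lam W \<and> u_lam M lam W \<noteq> \<infinity> \<and> u_lam M lam W \<noteq> - \<infinity>}"

definition u_contrib :: "'a measure \<Rightarrow> real \<Rightarrow> ('a \<Rightarrow> real) \<Rightarrow> ('a \<Rightarrow> real) \<Rightarrow> ereal" where
  "u_contrib M lam X W = (INF Q \<in> extreme_measures M lam W. EQ Q X)"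

end

theory Submission imports Defs begin

lemma integrable_bdd_mult:
  fixes f Y :: "'a \<Rightarrow> real"
  assumes [measurable]: "f \<in> borel_measurable M" and "AE x in M. \<bar>f x\<bar> \<le> c" and "integrable M Y"
  shows "integrable M (\<lambda>x. f x * Y x)"
proof (rule Bochner_Integration.integrable_bound[where f="\<lambda>x. c * Y x"])
  show "integrable M (\<lambda>x. c * Y x)" using assms by auto
  show "(\<lambda>x. f x * Y x) \<in> borel_measurable M" using assms borel_measurable_integrable by measurable
  show "AE x in M. norm (f x * Y x) \<le> norm (c * Y x)"
    using assms(2) by eventually_elim (auto simp: abs_mult intro: mult_right_mono)
qed

lemma EQ_density:
  fixes f Y :: "'a \<Rightarrow> real"
  assumes [measurable]: "f \<in> borel_measurable M" and nn: "\<forall>x\<in>space M. 0 \<le> f x"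
    and "integrable M (\<lambda>x. f x * Y x)" and [measurable]: "Y \<in> borel_measurable M"
  shows "EQ (density M (\<lambda>x. ennreal (f x))) Y = ereal (\<integral>x. f x * Y x \<partial>M)"
proof -
  let ?Z = "\<lambda>x. f x * Y x"
  have p: "(\<integral>\<^sup>+ x. ennreal (Y x) \<partial>density M (\<lambda>x. ennreal (f x))) = ennreal (\<integral>x. max 0 (?Z x) \<partial>M)"
  proof -
    have "(\<integral>\<^sup>+ x. ennreal (Y x) \<partial>density M (\<lambda>x. ennreal (f x))) = (\<integral>\<^sup>+ x. ennreal (f x) * ennreal (Y x) \<partial>M)"
      by (rule nn_integral_density) auto
    also have "\<dots> = (\<integral>\<^sup>+ x. ennreal (max 0 (?Z x)) \<partial>M)"
      apply (rule nn_integral_cong)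
      using nn by (auto simp: ennreal_mult'[symmetric] ennreal_max_0 max_def ennreal_neg)
    also have "\<dots> = ennreal (\<integral>x. max 0 (?Z x) \<partial>M)"
      by (rule nn_integral_eq_integral) (use assms in auto)
    finally show ?thesis .
  qed
  have n: "(\<integral>\<^sup>+ x. ennreal (- Y x) \<partial>density M (\<lambda>x. ennreal (f x))) = ennreal (\<integral>x. max 0 (- ?Z x) \<partial>M)"
  proof -
    have "(\<integral>\<^sup>+ x. ennreal (- Y x) \<partial>density M (\<lambda>x. ennreal (f x))) = (\<integral>\<^sup>+ x. ennreal (f x) * ennreal (- Y x) \<partial>M)"
      by (rule nn_integral_density) auto
    also have "\<dots> = (\<integral>\<^sup>+ x. ennreal (max 0 (- ?Z x)) \<partial>M)"
      apply (rule nn_integral_cong)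
      using nn by (auto simp: ennreal_mult'[symmetric] ennreal_max_0 max_def ennreal_neg)
    also have "\<dots> = ennreal (\<integral>x. max 0 (- ?Z x) \<partial>M)"
      by (rule nn_integral_eq_integral) (use assms in auto)
    finally show ?thesis .
  qed
  have "(\<integral>x. ?Z x \<partial>M) = (\<integral>x. max 0 (?Z x) \<partial>M) - (\<integral>x. max 0 (- ?Z x) \<partial>M)"
  proof -
    have "(\<integral>x. ?Z x \<partial>M) = (\<integral>x. max 0 (?Z x) - max 0 (- ?Z x) \<partial>M)"
      by (rule Bochner_Integration.integral_cong) auto
    also have "\<dots> = (\<integral>x. max 0 (?Z x) \<partial>M) - (\<integral>x. max 0 (- ?Z x) \<partial>M)"
      by (rule Bochner_Integration.integral_diff) (use assms in auto)
    finally show ?thesis .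
  qed
  moreover have "0 \<le> (\<integral>x. max 0 (?Z x) \<partial>M)" "0 \<le> (\<integral>x. max 0 (- ?Z x) \<partial>M)"
    by auto
  ultimately show ?thesis
    unfolding EQ_def Let_def p n by (simp add: enn2ereal_ennreal)
qed

definition adm :: "'a measure \<Rightarrow> real \<Rightarrow> ('a \<Rightarrow> real) \<Rightarrow> bool" where
  "adm M lam f \<longleftrightarrow> f \<in> borel_measurable M \<and> (\<forall>x\<in>space M. 0 \<le> f x)
       \<and> (AE x in M. f x \<le> 1 / lam) \<and> prob_space (density M (\<lambda>x. ennreal (f x)))"

lemma Dlam_adm: "Dlam M lam = {density M (\<lambda>x. ennreal (f x)) | f. adm M lam f}"
  unfolding Dlam_def adm_def by auto

lemma adm_facts:
  assumes M: "prob_space M" and lam: "0 < lam" and a: "adm M lam f"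
  shows "integrable M f" "(\<integral>x. f x \<partial>M) = 1"
    "\<And>Y. integrable M Y \<Longrightarrow> integrable M (\<lambda>x. f x * Y x)"
    "\<And>Y. integrable M Y \<Longrightarrow> EQ (density M (\<lambda>x. ennreal (f x))) Y = ereal (\<integral>x. f x * Y x \<partial>M)"
proof -
  interpret prob_space M by fact
  have fm[measurable]: "f \<in> borel_measurable M" and nn: "\<forall>x\<in>space M. 0 \<le> f x"
    and bd: "AE x in M. f x \<le> 1 / lam" and ps: "prob_space (density M (\<lambda>x. ennreal (f x)))"
    using a unfolding adm_def by auto
  have bd': "AE x in M. \<bar>f x\<bar> \<le> 1 / lam"
    using bd AE_space by eventually_elim (use nn in auto)
  show mi: "\<And>Y. integrable M Y \<Longrightarrow> integrable M (\<lambda>x. f x * Y x)"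
    by (rule integrable_bdd_mult[OF fm bd'])
  show fi: "integrable M f" using mi[of "\<lambda>_. 1"] by simp
  show "EQ (density M (\<lambda>x. ennreal (f x))) Y = ereal (\<integral>x. f x * Y x \<partial>M)" if Y: "integrable M Y" for Y
    by (rule EQ_density[OF fm nn mi[OF Y] borel_measurable_integrable[OF Y]])
  have "1 = emeasure (density M (\<lambda>x. ennreal (f x))) (space M)"
    using prob_space.emeasure_space_1[OF ps] by simp
  also have "\<dots> = (\<integral>\<^sup>+ x. ennreal (f x) * indicator (space M) x \<partial>M)"
    by (rule emeasure_density) auto
  also have "\<dots> = (\<integral>\<^sup>+ x. ennreal (f x) \<partial>M)"
    by (rule nn_integral_cong) auto
  also have "\<dots> = ennreal (\<integral>x. f x \<partial>M)"
    by (rule nn_integral_eq_integral) (use fi nn in auto)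
  finally have "ennreal (\<integral>x. f x \<partial>M) = 1" by simp
  moreover have "0 \<le> (\<integral>x. f x \<partial>M)" using nn by (simp add: integral_nonneg)
  ultimately show "(\<integral>x. f x \<partial>M) = 1" by simp
qed

lemma u_contrib_eq:
  assumes M: "prob_space M" and X: "integrable M X" and W: "integrable M W" and lam: "0 < lam"
    and g: "adm M lam g"
    and mini: "\<And>f. adm M lam f \<Longrightarrow> (\<integral>x. g x * W x \<partial>M) \<le> (\<integral>x. f x * W x \<partial>M)"
    and uniq: "\<And>f. adm M lam f \<Longrightarrow> (\<integral>x. f x * W x \<partial>M) = (\<integral>x. g x * W x \<partial>M) \<Longrightarrow> AE x in M. f x = g x"
  shows "u_contrib M lam X W = ereal (\<integral>x. g x * X x \<partial>M)"
proof -
  let ?Q = "density M (\<lambda>x. ennreal (g x))"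
  have gQ: "?Q \<in> Dlam M lam" using g unfolding Dlam_adm by auto
  have u: "u_lam M lam W = ereal (\<integral>x. g x * W x \<partial>M)"
    unfolding u_lam_def
  proof (rule antisym)
    show "(INF Q \<in> Dlam M lam. EQ Q W) \<le> ereal (\<integral>x. g x * W x \<partial>M)"
      using INF_lower[OF gQ, of "\<lambda>Q. EQ Q W"] adm_facts(4)[OF M lam g W] by simp
    show "ereal (\<integral>x. g x * W x \<partial>M) \<le> (INF Q \<in> Dlam M lam. EQ Q W)"
    proof (rule INF_greatest)
      fix Q assume "Q \<in> Dlam M lam"
      then obtain f where f: "adm M lam f" and Q: "Q = density M (\<lambda>x. ennreal (f x))"
        unfolding Dlam_adm by auto
      show "ereal (\<integral>x. g x * W x \<partial>M) \<le> EQ Q W"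
        using Q adm_facts(4)[OF M lam f W] mini[OF f] by simp
    qed
  qed
  have ext: "\<And>Q. Q \<in> extreme_measures M lam W \<Longrightarrow> EQ Q X = ereal (\<integral>x. g x * X x \<partial>M)"
  proof -
    fix Q assume "Q \<in> extreme_measures M lam W"
    then have Qd: "Q \<in> Dlam M lam" and eq: "EQ Q W = u_lam M lam W"
      unfolding extreme_measures_def by auto
    then obtain f where f: "adm M lam f" and Q: "Q = density M (\<lambda>x. ennreal (f x))"
      unfolding Dlam_adm by auto
    have "(\<integral>x. f x * W x \<partial>M) = (\<integral>x. g x * W x \<partial>M)"
      using eq u Q adm_facts(4)[OF M lam f W] by simp
    then have ae: "AE x in M. f x = g x" by (rule uniq[OF f])
    have "(\<integral>x. f x * X x \<partial>M) = (\<integral>x. g x * X x \<partial>M)"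
      apply (rule integral_cong_AE)
      apply (rule borel_measurable_integrable[OF adm_facts(3)[OF M lam f X]])
      apply (rule borel_measurable_integrable[OF adm_facts(3)[OF M lam g X]])
      using ae by eventually_elim simp
    then show "EQ Q X = ereal (\<integral>x. g x * X x \<partial>M)"
      using Q adm_facts(4)[OF M lam f X] by simp
  qed
  have gE: "?Q \<in> extreme_measures M lam W"
    unfolding extreme_measures_def using gQ u adm_facts(4)[OF M lam g W] by simp
  show ?thesis
    unfolding u_contrib_def
  proof (rule antisym)
    show "(INF Q \<in> extreme_measures M lam W. EQ Q X) \<le> ereal (\<integral>x. g x * X x \<partial>M)"
      using INF_lower[OF gE, of "\<lambda>Q. EQ Q X"] ext[OF gE] by simp
    show "ereal (\<integral>x. g x * X x \<partial>M) \<le> (INF Q \<in> extreme_measures M lam W. EQ Q X)"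
      by (rule INF_greatest) (simp add: ext)
  qed
qed

lemma adm_one:
  assumes M: "prob_space M" and f: "adm M 1 f"
  shows "AE x in M. f x = 1"
proof -
  interpret prob_space M by fact
  have fi: "integrable M f" and i1: "(\<integral>x. f x \<partial>M) = 1" using adm_facts[OF M _ f] by auto
  have bd: "AE x in M. f x \<le> 1" using f unfolding adm_def by simp
  have "(\<integral>x. 1 - f x \<partial>M) = 0"
    using fi i1 by (simp add: Bochner_Integration.integral_diff prob_space)
  moreover have "AE x in M. 0 \<le> 1 - f x" using bd by eventually_elim simp
  ultimately have "AE x in M. 1 - f x = 0"
    using integral_nonneg_eq_0_iff_AE[of M "\<lambda>x. 1 - f x"] fi by auto
  then show ?thesis by eventually_elim simp
qed

lemma u_contrib_one:
  assumes M: "prob_space M" and X: "integrable M X" and W: "integrable M W"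
  shows "u_contrib M 1 X W = ereal (\<integral>x. X x \<partial>M)"
proof -
  interpret prob_space M by fact
  have g: "adm M 1 (\<lambda>_. 1)"
    unfolding adm_def using M by (simp add: density_1)
  have eqint: "(\<integral>x. f x * Y x \<partial>M) = (\<integral>x. Y x \<partial>M)" if f: "adm M 1 f" and Y: "integrable M Y" for f Y
  proof -
    have "(\<integral>x. f x * Y x \<partial>M) = (\<integral>x. 1 * Y x \<partial>M)"
      apply (rule integral_cong_AE)
      apply (rule borel_measurable_integrable[OF adm_facts(3)[OF M _ f Y]], simp)
      using Y apply simp
      using adm_one[OF M f] by eventually_elim simp
    then show ?thesis by simp
  qed
  have "u_contrib M 1 X W = ereal (\<integral>x. 1 * X x \<partial>M)"
    by (rule u_contrib_eq[OF M X W _ g]) (auto simp: eqint[OF _ W] adm_one[OF M])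
  then show ?thesis by simp
qed

lemma u_contrib_q:
  assumes M: "prob_space M" and X: "integrable M X" and W: "integrable M W" and lam: "0 < lam"
    and A: "A = {x\<in>space M. W x \<le> q}" and mA: "measure M A = lam"
    and atom: "measure M {x\<in>space M. W x = q} = 0"
  shows "u_contrib M lam X W = ereal ((\<integral>x. indicator A x * X x \<partial>M) / lam)"
proof -
  interpret prob_space M by fact
  have Wm[measurable]: "W \<in> borel_measurable M" using W by auto
  have As[measurable]: "A \<in> sets M" unfolding A by measurable
  define g where "g x = indicator A x / lam" for x
  have gm[measurable]: "g \<in> borel_measurable M" unfolding g_def by measurable
  have gi: "integrable M g" unfolding g_def
    by (intro integrable_divide_zero integrable_real_indicator As) (simp add: emeasure_eq_measure)
  have gint: "(\<integral>x. g x \<partial>M) = 1"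
    unfolding g_def using mA lam As by (simp add: integral_divide_zero)
  have g: "adm M lam g"
    unfolding adm_def
  proof (intro conjI)
    show "g \<in> borel_measurable M" by measurable
    show "\<forall>x\<in>space M. 0 \<le> g x" using lam by (auto simp: g_def)
    show "AE x in M. g x \<le> 1 / lam" using lam by (intro AE_I2) (simp add: g_def indicator_def)
    show "prob_space (density M (\<lambda>x. ennreal (g x)))"
    proof (rule prob_spaceI)
      have "emeasure (density M (\<lambda>x. ennreal (g x))) (space M) = (\<integral>\<^sup>+ x. ennreal (g x) * indicator (space M) x \<partial>M)"
        by (rule emeasure_density) auto
      also have "\<dots> = (\<integral>\<^sup>+ x. ennreal (g x) \<partial>M)"
        by (rule nn_integral_cong) auto
      also have "\<dots> = ennreal (\<integral>x. g x \<partial>M)"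
        by (rule nn_integral_eq_integral[OF gi]) (use lam in \<open>auto simp: g_def\<close>)
      finally show "emeasure (density M (\<lambda>x. ennreal (g x))) (space (density M (\<lambda>x. ennreal (g x)))) = 1"
        using gint by simp
    qed
  qed
  have AEq: "AE x in M. W x \<noteq> q"
  proof -
    have "{x\<in>space M. W x = q} \<in> sets M" by measurable
    moreover have "{x\<in>space M. \<not> W x \<noteq> q} = {x\<in>space M. W x = q}" by auto
    ultimately show ?thesis
      using AE_iff_measurable[of "{x\<in>space M. W x = q}" M "\<lambda>x. W x \<noteq> q"] atom
      by (simp add: emeasure_eq_measure)
  qed
  have diff: "(\<integral>x. (f x - g x) * (W x - q) \<partial>M) = (\<integral>x. f x * W x \<partial>M) - (\<integral>x. g x * W x \<partial>M)"
    and nonneg: "AE x in M. 0 \<le> (f x - g x) * (W x - q)"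
    and ii: "integrable M (\<lambda>x. (f x - g x) * (W x - q))"
    if f: "adm M lam f" for f
  proof -
    have fi: "integrable M f" and f1: "(\<integral>x. f x \<partial>M) = 1"
      and fW: "integrable M (\<lambda>x. f x * W x)" using adm_facts[OF M lam f] W by auto
    have gW: "integrable M (\<lambda>x. g x * W x)" using adm_facts(3)[OF M lam g W] .
    have eq: "(\<lambda>x. (f x - g x) * (W x - q)) = (\<lambda>x. (f x * W x - g x * W x) - (q * f x - q * g x))"
      by (rule ext) (simp add: algebra_simps)
    show ii: "integrable M (\<lambda>x. (f x - g x) * (W x - q))"
      unfolding eq by (intro Bochner_Integration.integrable_diff integrable_mult_right fW gW fi gi)
    show "(\<integral>x. (f x - g x) * (W x - q) \<partial>M) = (\<integral>x. f x * W x \<partial>M) - (\<integral>x. g x * W x \<partial>M)"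
      unfolding eq
      apply (subst Bochner_Integration.integral_diff)
        apply (intro Bochner_Integration.integrable_diff integrable_mult_right fW gW fi gi)+
      apply (subst Bochner_Integration.integral_diff[OF fW gW])
      apply (subst Bochner_Integration.integral_diff)
        apply (intro integrable_mult_right fi gi)+
      using f1 gint by simp
    have bd: "AE x in M. f x \<le> 1 / lam" and nn: "\<forall>x\<in>space M. 0 \<le> f x"
      using f unfolding adm_def by auto
    show "AE x in M. 0 \<le> (f x - g x) * (W x - q)"
      using bd AE_space
    proof eventually_elim
      case (elim x)
      show ?case
      proof (cases "x \<in> A")
        case True
        then have "W x \<le> q" "g x = 1 / lam" unfolding A g_def by auto
        then show ?thesis using elim by (intro mult_nonpos_nonpos) simp_all
      next
        case False
        then have "W x > q" "g x = 0" using elim unfolding A g_def by auto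
        then show ?thesis using elim nn by simp
      qed
    qed
  qed
  have "u_contrib M lam X W = ereal (\<integral>x. g x * X x \<partial>M)"
  proof (rule u_contrib_eq[OF M X W lam g])
    fix f assume f: "adm M lam f"
    show "(\<integral>x. g x * W x \<partial>M) \<le> (\<integral>x. f x * W x \<partial>M)"
      using integral_nonneg_AE[OF nonneg[OF f]] diff[OF f] by simp
    assume "(\<integral>x. f x * W x \<partial>M) = (\<integral>x. g x * W x \<partial>M)"
    then have "(\<integral>x. (f x - g x) * (W x - q) \<partial>M) = 0" using diff[OF f] by simp
    then have "AE x in M. (f x - g x) * (W x - q) = 0"
      using integral_nonneg_eq_0_iff_AE[OF ii[OF f] nonneg[OF f]] by simp
    then show "AE x in M. f x = g x"
      using AEq by eventually_elim simp
  qed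
  also have "(\<integral>x. g x * X x \<partial>M) = (\<integral>x. indicator A x * X x \<partial>M) / lam"
  proof -
    have "(\<lambda>x. g x * X x) = (\<lambda>x. indicator A x * X x / lam)"
      unfolding g_def by (rule ext) simp
    then show ?thesis by (simp only: integral_divide_zero)
  qed
  finally show ?thesis .
qed

lemma exists_quantile:
  fixes W :: "'a \<Rightarrow> real"
  assumes M: "prob_space M" and Wm[measurable]: "W \<in> borel_measurable M"
    and atom: "\<And>w. measure M {x \<in> space M. W x = w} = 0"
    and lam: "0 < lam" "lam < 1"
  shows "\<exists>q. measure M {x\<in>space M. W x \<le> q} = lam"
proof -
  interpret prob_space M by fact
  define D :: "real measure" where "D = distr M borel W"
  interpret D: real_distribution D unfolding D_def by (rule real_distribution_distr) simp
  have cdfD: "cdf D t = measure M {x\<in>space M. W x \<le> t}" for t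
  proof -
    have "cdf D t = measure M (W -` {..t} \<inter> space M)"
      unfolding cdf_def D_def by (rule measure_distr) auto
    also have "W -` {..t} \<inter> space M = {x\<in>space M. W x \<le> t}" by auto
    finally show ?thesis .
  qed
  have cont: "isCont (cdf D) t" for t
  proof -
    have "measure D {t} = measure M (W -` {t} \<inter> space M)"
      unfolding D_def by (rule measure_distr) auto
    also have "W -` {t} \<inter> space M = {x\<in>space M. W x = t}" by auto
    finally show ?thesis using D.isCont_cdf atom by simp
  qed
  have "eventually (\<lambda>t. cdf D t < lam) at_bot"
    using order_tendstoD(2)[OF D.cdf_lim_at_bot lam(1)] .
  then obtain a where a: "\<And>t. t \<le> a \<Longrightarrow> cdf D t < lam"
    unfolding eventually_at_bot_linorder by blast
  have "eventually (\<lambda>t. cdf D t > lam) at_top"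
    using order_tendstoD(1)[OF D.cdf_lim_at_top_prob lam(2)] .
  then obtain b where b: "\<And>t. t \<ge> b \<Longrightarrow> cdf D t > lam"
    unfolding eventually_at_top_linorder by blast
  have "\<exists>t. a \<le> t \<and> t \<le> max a b \<and> cdf D t = lam"
    by (rule IVT') (use a b cont in \<open>auto intro: less_imp_le continuous_at_imp_continuous_on\<close>)
  then show ?thesis using cdfD by auto
qed

lemma sets_F_gen:
  fixes W :: "'a \<Rightarrow> real"
  assumes Wm[measurable]: "W \<in> borel_measurable M"
  shows "sets (vimage_algebra (space M) W borel) =
    sigma_sets (space M) {W -` A \<inter> space M | A. A \<in> range (\<lambda>a::real. {..a})}"
proof -
  have "sets (vimage_algebra (space M) W borel) =
      sets (vimage_algebra (space M) W (sigma UNIV (range (\<lambda>a::real. {..a}))))"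
    by (rule sets_vimage_algebra_cong) (metis borel_eq_atMost)
  also have "vimage_algebra (space M) W (sigma UNIV (range (\<lambda>a::real. {..a}))) =
      sigma (space M) {W -` A \<inter> space M | A. A \<in> range (\<lambda>a::real. {..a})}"
    by (rule vimage_algebra_sigma) auto
  also have "sets \<dots> = sigma_sets (space M) {W -` A \<inter> space M | A. A \<in> range (\<lambda>a::real. {..a})}"
    by (rule sets_measure_of) auto
  finally show ?thesis .
qed

lemma all_sets_zero:
  fixes W X :: "'a \<Rightarrow> real"
  assumes M: "prob_space M" and X: "integrable M X" and Wm[measurable]: "W \<in> borel_measurable M"
    and hq: "\<And>q. (\<integral>x. indicator {x\<in>space M. W x \<le> q} x * X x \<partial>M) = 0"
    and h1: "(\<integral>x. X x \<partial>M) = 0"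
    and A: "A \<in> sets (vimage_algebra (space M) W borel)"
  shows "(\<integral>x. indicator A x * X x \<partial>M) = 0"
proof -
  interpret prob_space M by fact
  let ?G = "{W -` A \<inter> space M | A. A \<in> range (\<lambda>a::real. {..a})}"
  have GM: "?G \<subseteq> sets M" by auto
  have sub: "sigma_sets (space M) ?G \<subseteq> sets M"
    by (rule sets.sigma_sets_subset[OF GM])
  have "Int_stable ?G"
  proof (rule Int_stableI)
    fix a b assume "a \<in> ?G" "b \<in> ?G"
    then obtain s t where "a = W -` {..s} \<inter> space M" "b = W -` {..t} \<inter> space M" by auto
    then have "a \<inter> b = W -` {..min s t} \<inter> space M" by auto
    then show "a \<inter> b \<in> ?G" by blast
  qed
  moreover have "?G \<subseteq> Pow (space M)" by auto
  moreover have "A \<in> sigma_sets (space M) ?G" using A sets_F_gen[OF Wm] by simp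
  ultimately show ?thesis
  proof (induction rule: sigma_sets_induct_disjoint)
    case (basic A)
    then obtain q where "A = W -` {..q} \<inter> space M" by auto
    then have "A = {x\<in>space M. W x \<le> q}" by auto
    then show ?case using hq by simp
  next
    case empty
    then show ?case by simp
  next
    case (compl A)
    have As: "A \<in> sets M" using compl.hyps sub by auto
    have "(\<integral>x. indicator (space M - A) x * X x \<partial>M) = (\<integral>x. X x - indicator A x * X x \<partial>M)"
      by (rule Bochner_Integration.integral_cong) (auto simp: indicator_def)
    also have "\<dots> = (\<integral>x. X x \<partial>M) - (\<integral>x. indicator A x * X x \<partial>M)"
      by (rule Bochner_Integration.integral_diff[OF X])
        (use integrable_mult_indicator[OF As X] in simp)
    finally show ?case using compl.IH h1 by simp
  next
    case (union A)
    have As: "A i \<in> sets M" for i using union.hyps sub by auto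
    have Us: "(\<Union>i. A i) \<in> sets M" using As by auto
    have "(LINT x:(\<Union>i. A i)|M. X x) = (\<Sum>i. (LINT x:(A i)|M. X x))"
    proof (rule lebesgue_integral_countable_add[OF As])
      show "\<And>i j. i \<noteq> j \<Longrightarrow> A i \<inter> A j = {}"
        using union.hyps(1) unfolding disjoint_family_on_def by auto
      show "set_integrable M (\<Union>i. A i) X"
        unfolding set_integrable_def by (rule integrable_mult_indicator[OF Us X])
    qed
    also have "\<dots> = 0" using union.IH by (simp add: set_lebesgue_integral_def)
    finally show ?case by (simp add: set_lebesgue_integral_def)
  qed
qed

theorem proposition5p9:
  fixes M :: "'a measure" and X W :: "'a \<Rightarrow> real"
  assumes "prob_space M"
    and "integrable M X" and "integrable M W"
    and "\<And>w. measure M {x \<in> space M. W x = w} = 0"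
  shows "(\<forall>lam. 0 < lam \<and> lam \<le> 1 \<longrightarrow> u_contrib M lam X W = 0) \<longleftrightarrow>
         (AE x in M. real_cond_exp M (vimage_algebra (space M) W borel) X x = 0)"
proof -
  note M = assms(1) and X = assms(2) and W = assms(3) and atom = assms(4)
  interpret prob_space M by fact
  have Wm[measurable]: "W \<in> borel_measurable M" using W by auto
  define F where "F = vimage_algebra (space M) W borel"
  have setsF: "sets F = {W -` A \<inter> space M | A. A \<in> sets borel}"
    unfolding F_def by (rule sets_vimage_algebra2) simp
  have subalg: "subalgebra M F"
    unfolding subalgebra_def
  proof
    show "space F = space M" unfolding F_def by simp
    show "sets F \<subseteq> sets M"
    proof
      fix B assume "B \<in> sets F"
      then obtain A where "A \<in> sets borel" "B = W -` A \<inter> space M" unfolding setsF by blast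
      then show "B \<in> sets M" using measurable_sets[OF Wm] by blast
    qed
  qed
  interpret S: sigma_finite_subalgebra M F
  proof (rule finite_measure_subalgebra_is_sigma_finite)
    show "finite_measure_subalgebra M F"
      unfolding finite_measure_subalgebra_def finite_measure_subalgebra_axioms_def
      using subalg finite_measure_axioms by blast
  qed
  have Aq: "{x\<in>space M. W x \<le> q} \<in> sets F" for q
  proof -
    have e: "{x\<in>space M. W x \<le> q} = W -` {..q} \<inter> space M" by auto
    have "{..q} \<in> sets borel" by simp
    then show ?thesis unfolding setsF e by blast
  qed
  show ?thesis
    unfolding F_def[symmetric]
  proof
    assume H: "\<forall>lam. 0 < lam \<and> lam \<le> 1 \<longrightarrow> u_contrib M lam X W = 0"
    have h1: "(\<integral>x. X x \<partial>M) = 0"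
      using H[rule_format, of 1] u_contrib_one[OF M X W] by (simp add: zero_ereal_def)
    have hq: "(\<integral>x. indicator {x\<in>space M. W x \<le> q} x * X x \<partial>M) = 0" for q
    proof (cases "measure M {x\<in>space M. W x \<le> q} = 0")
      case True
      have "{x\<in>space M. W x \<le> q} \<in> null_sets M"
        using True by (auto simp: null_sets_def emeasure_eq_measure)
      then have "AE x in M. x \<notin> {x\<in>space M. W x \<le> q}" by (rule AE_not_in)
      then have "AE x in M. indicator {x\<in>space M. W x \<le> q} x * X x = 0"
        by eventually_elim simp
      then show ?thesis by (rule integral_eq_zero_AE)
    next
      case False
      let ?l = "measure M {x\<in>space M. W x \<le> q}"
      have l: "0 < ?l" "?l \<le> 1" using False by (auto simp: less_le)
      have "ereal ((\<integral>x. indicator {x\<in>space M. W x \<le> q} x * X x \<partial>M) / ?l) = 0"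
        using u_contrib_q[OF M X W l(1) refl refl atom] H l by simp
      then show ?thesis using l by (simp add: zero_ereal_def)
    qed
    have allA: "(LINT x:A|M. X x) = (LINT x:A|M. 0)" if "A \<in> sets F" for A
      using all_sets_zero[OF M X Wm hq h1, of A] that
      by (simp add: F_def set_lebesgue_integral_def)
    show "AE x in M. real_cond_exp M F X x = 0"
      by (rule S.real_cond_exp_charact[OF allA X]) auto
  next
    assume H: "AE x in M. real_cond_exp M F X x = 0"
    have zA: "(\<integral>x. indicator A x * X x \<partial>M) = 0" if "A \<in> sets F" for A
    proof -
      have "(LINT x:A|M. X x) = (LINT x:A|M. real_cond_exp M F X x)"
        by (rule S.real_cond_exp_intA[OF X that])
      also have "\<dots> = 0"
        unfolding set_lebesgue_integral_def
        by (rule integral_eq_zero_AE) (use H in \<open>eventually_elim, simp\<close>)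
      finally show ?thesis by (simp add: set_lebesgue_integral_def)
    qed
    show "\<forall>lam. 0 < lam \<and> lam \<le> 1 \<longrightarrow> u_contrib M lam X W = 0"
    proof (intro allI impI)
      fix lam :: real assume lam: "0 < lam \<and> lam \<le> 1"
      show "u_contrib M lam X W = 0"
      proof (cases "lam = 1")
        case True
        have "(\<integral>x. X x \<partial>M) = (\<integral>x. real_cond_exp M F X x \<partial>M)"
          using S.real_cond_exp_int(2)[OF X] by simp
        also have "\<dots> = 0" by (rule integral_eq_zero_AE[OF H])
        finally show ?thesis using True u_contrib_one[OF M X W] by (simp add: zero_ereal_def)
      next
        case False
        then have "lam < 1" using lam by simp
        then obtain q where q: "measure M {x\<in>space M. W x \<le> q} = lam"
          using exists_quantile[OF M Wm atom] lam by blast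
        have "u_contrib M lam X W = ereal ((\<integral>x. indicator {x\<in>space M. W x \<le> q} x * X x \<partial>M) / lam)"
          using u_contrib_q[OF M X W _ refl q atom] lam by simp
        then show ?thesis using zA[OF Aq] by (simp add: zero_ereal_def)
      qed
    qed
  qed
qed

end
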